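(* Let $E\subset\mathbb T$ be an infinite set and $K_1\subset\mathbb T$ a compact set with $\overline{E}\cap K_1=\emptyset$. Let $$\mathcal R=\Big\{c_0+i\sum_{k=1}^n c_k\frac{e^{i\psi_k}+z}{e^{i\psi_k}-z}\ :\ n\in\mathbb N,\ c_0,c_1,\dots,c_n\in\mathbb R,\ e^{i\psi_k}\in E\ (1\le k\le n)\Big\}.$$ Then each element of $\mathcal R$ is real-valued on $K_1$, and the set of restrictions $\{r_{|_{K_1}}: r\in\mathcal R\}$ is uniformly dense in $C_{\mathbb R}(K_1)$, the space of real-valued continuous functions on $K_1$.
   Context: $\mathbb T$ is the unit circle in $\mathbb C$; $z$ denotes the complex variable. *)

theory Defs
  imports "HOL-Analysis.Analysis"
begin

definition herglotz_class :: "complex set \<Rightarrow> (complex \<Rightarrow> complex) set" where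
  "herglotz_class E = {r. \<exists>(n::nat) (c::nat \<Rightarrow> real) (e::nat \<Rightarrow> complex).
      (\<forall>k\<in>{1..n}. e k \<in> E) \<and>
      r = (\<lambda>z. complex_of_real (c 0) +
              \<i> * (\<Sum>k=1..n. complex_of_real (c k) * ((e k + z) / (e k - z))))}"

end

theory Submission
  imports Defs
begin

lemma hc_const: "(\<lambda>z. complex_of_real c) \<in> herglotz_class E"
  unfolding herglotz_class_def
  by (rule CollectI, rule exI[of _ 0], rule exI[of _ "\<lambda>_. c"], rule exI[of _ "\<lambda>_. 0"]) simp

lemma hc_gen: "w \<in> E \<Longrightarrow> (\<lambda>z. \<i> * ((w + z) / (w - z))) \<in> herglotz_class E"
  unfolding herglotz_class_def
  by (rule CollectI, rule exI[of _ 1], rule exI[of _ "\<lambda>k. if k = 0 then 0 else 1"],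
      rule exI[of _ "\<lambda>_. w"]) simp

lemma hc_ex:
  fixes E :: "complex set" and r :: "complex \<Rightarrow> complex"
  assumes "r \<in> herglotz_class E"
  shows "\<exists>(n::nat) (c::nat\<Rightarrow>real) (e::nat\<Rightarrow>complex). (\<forall>k\<in>{1..n}. e k \<in> E) \<and>
      r = (\<lambda>z. complex_of_real (c 0) +
              \<i> * (\<Sum>k=1..n. complex_of_real (c k) * ((e k + z) / (e k - z))))"
  using assms unfolding herglotz_class_def mem_Collect_eq .

lemma hc_scale:
  fixes E :: "complex set" and r :: "complex \<Rightarrow> complex"
  assumes "r \<in> herglotz_class E"
  shows "(\<lambda>z. complex_of_real a * r z) \<in> herglotz_class E"
proof -
  obtain n :: nat and c :: "nat \<Rightarrow> real" and e :: "nat \<Rightarrow> complex" where e: "\<forall>k\<in>{1..n}. e k \<in> E" and r: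
    "r = (\<lambda>z. complex_of_real (c 0) +
              \<i> * (\<Sum>k=1..n. complex_of_real (c k) * ((e k + z) / (e k - z))))"
    using hc_ex[OF assms] by blast
  show ?thesis unfolding herglotz_class_def
    apply (rule CollectI, rule exI[of _ n], rule exI[of _ "\<lambda>k. a * c k"], rule exI[of _ e])
    using e by (auto simp: r sum_distrib_left algebra_simps)
qed

lemma hc_add:
  fixes E :: "complex set" and r1 r2 :: "complex \<Rightarrow> complex"
  assumes "r1 \<in> herglotz_class E" "r2 \<in> herglotz_class E"
  shows "(\<lambda>z. r1 z + r2 z) \<in> herglotz_class E"
proof -
  obtain n1 :: nat and c1 :: "nat \<Rightarrow> real" and e1 :: "nat \<Rightarrow> complex" where e1: "\<forall>k\<in>{1..n1}. e1 k \<in> E" and r1: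
    "r1 = (\<lambda>z. complex_of_real (c1 0) +
              \<i> * (\<Sum>k=1..n1. complex_of_real (c1 k) * ((e1 k + z) / (e1 k - z))))"
    using hc_ex[OF assms(1)] by blast
  obtain n2 :: nat and c2 :: "nat \<Rightarrow> real" and e2 :: "nat \<Rightarrow> complex" where e2: "\<forall>k\<in>{1..n2}. e2 k \<in> E" and r2:
    "r2 = (\<lambda>z. complex_of_real (c2 0) +
              \<i> * (\<Sum>k=1..n2. complex_of_real (c2 k) * ((e2 k + z) / (e2 k - z))))"
    using hc_ex[OF assms(2)] by blast
  define c where "c = (\<lambda>k. if k = 0 then c1 0 + c2 0 else if k \<le> n1 then c1 k else c2 (k - n1))"
  define e where "e = (\<lambda>k. if k \<le> n1 then e1 k else e2 (k - n1))"
  define F where "F = (\<lambda>z k. complex_of_real (c k) * ((e k + z) / (e k - z)))"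
  have split: "(\<Sum>k=1..n1+n2. F z k) = (\<Sum>k=1..n1. F z k) + (\<Sum>k=n1+1..n1+n2. F z k)" for z
  proof -
    have "{1..n1+n2} = {1..n1} \<union> {n1+1..n1+n2}" by auto
    then show ?thesis by (simp add: sum.union_disjoint)
  qed
  have s1: "(\<Sum>k=1..n1. F z k) = (\<Sum>k=1..n1. complex_of_real (c1 k) * ((e1 k + z) / (e1 k - z)))" for z
    by (rule sum.cong) (auto simp: F_def c_def e_def)
  have s2: "(\<Sum>k=n1+1..n1+n2. F z k) = (\<Sum>k=1..n2. complex_of_real (c2 k) * ((e2 k + z) / (e2 k - z)))" for z
  proof -
    have "(\<Sum>k=n1+1..n1+n2. F z k) = (\<Sum>k=1..n2. F z (k + n1))"
      using sum.shift_bounds_cl_nat_ivl[of "F z" 1 n1 n2] by (simp add: add.commute)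
    also have "\<dots> = (\<Sum>k=1..n2. complex_of_real (c2 k) * ((e2 k + z) / (e2 k - z)))"
      by (rule sum.cong) (auto simp: F_def c_def e_def)
    finally show ?thesis .
  qed
  have eE: "\<forall>k\<in>{1..n1+n2}. e k \<in> E"
  proof
    fix k assume k: "k \<in> {1..n1+n2}"
    show "e k \<in> E"
    proof (cases "k \<le> n1")
      case True then show ?thesis using e1 k by (auto simp: e_def)
    next
      case False
      then have "k - n1 \<in> {1..n2}" using k by auto
      then show ?thesis using e2 False by (auto simp: e_def)
    qed
  qed
  have "(\<lambda>z. r1 z + r2 z) = (\<lambda>z. complex_of_real (c 0) + \<i> * (\<Sum>k=1..n1+n2. F z k))"
    by (rule ext) (simp only: r1 r2 split s1 s2, simp add: c_def algebra_simps)
  then show ?thesis unfolding herglotz_class_def mem_Collect_eq F_def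
    by (intro exI[of _ "n1+n2"] exI[of _ c] exI[of _ e] conjI eE)
qed

definition apx :: "complex set \<Rightarrow> complex set \<Rightarrow> (complex \<Rightarrow> real) \<Rightarrow> bool" where
  "apx E K h \<longleftrightarrow> (\<forall>\<delta>>0. \<exists>r\<in>herglotz_class E. \<forall>z\<in>K. cmod (r z - complex_of_real (h z)) < \<delta>)"

lemma apx_const: "apx E K (\<lambda>z. c)"
  unfolding apx_def using hc_const[of c E] by (intro allI impI bexI[of _ "\<lambda>z. complex_of_real c"]) auto

lemma apx_add:
  assumes "apx E K f" "apx E K g"
  shows "apx E K (\<lambda>z. f z + g z)"
  unfolding apx_def
proof (intro allI impI)
  fix d :: real assume d: "d > 0"
  obtain r1 where r1: "r1 \<in> herglotz_class E" "\<forall>z\<in>K. cmod (r1 z - complex_of_real (f z)) < d/2"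
    using assms(1) d unfolding apx_def by (meson half_gt_zero)
  obtain r2 where r2: "r2 \<in> herglotz_class E" "\<forall>z\<in>K. cmod (r2 z - complex_of_real (g z)) < d/2"
    using assms(2) d unfolding apx_def by (meson half_gt_zero)
  show "\<exists>r\<in>herglotz_class E. \<forall>z\<in>K. cmod (r z - complex_of_real (f z + g z)) < d"
  proof (intro bexI[of _ "\<lambda>z. r1 z + r2 z"] ballI)
    fix z assume z: "z \<in> K"
    have "cmod (r1 z + r2 z - complex_of_real (f z + g z))
        = cmod ((r1 z - complex_of_real (f z)) + (r2 z - complex_of_real (g z)))"
      by (simp add: algebra_simps)
    also have "\<dots> \<le> cmod (r1 z - complex_of_real (f z)) + cmod (r2 z - complex_of_real (g z))"
      by (rule norm_triangle_ineq)
    also have "\<dots> < d/2 + d/2"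
      by (rule add_strict_mono) (use r1(2) r2(2) z in blast)+
    also have "\<dots> = d" by simp
    finally show "cmod (r1 z + r2 z - complex_of_real (f z + g z)) < d" .
  qed (rule hc_add[OF r1(1) r2(1)])
qed

lemma apx_scale:
  assumes "apx E K f"
  shows "apx E K (\<lambda>z. a * f z)"
proof (cases "a = 0")
  case True then show ?thesis using apx_const[of E K 0] by simp
next
  case False
  show ?thesis unfolding apx_def
  proof (intro allI impI)
    fix d :: real assume d: "d > 0"
    then have "d / \<bar>a\<bar> > 0" using False by simp
    then obtain r where r: "r \<in> herglotz_class E" "\<forall>z\<in>K. cmod (r z - complex_of_real (f z)) < d / \<bar>a\<bar>"
      using assms unfolding apx_def by blast
    show "\<exists>r\<in>herglotz_class E. \<forall>z\<in>K. cmod (r z - complex_of_real (a * f z)) < d"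
    proof (intro bexI[of _ "\<lambda>z. complex_of_real a * r z"] ballI)
      fix z assume z: "z \<in> K"
      have "cmod (complex_of_real a * r z - complex_of_real (a * f z))
          = \<bar>a\<bar> * cmod (r z - complex_of_real (f z))"
      proof -
        have "complex_of_real a * r z - complex_of_real (a * f z) = complex_of_real a * (r z - complex_of_real (f z))"
          by (simp add: algebra_simps)
        then show ?thesis by (simp only: norm_mult norm_of_real)
      qed
      also have "\<dots> < \<bar>a\<bar> * (d / \<bar>a\<bar>)"
        using r(2) z False by (intro mult_strict_left_mono) auto
      also have "\<dots> = d" using False by simp
      finally show "cmod (complex_of_real a * r z - complex_of_real (a * f z)) < d" .
    qed (rule hc_scale[OF r(1)])
  qed
qed

lemma apx_diff:
  assumes "apx E K f" "apx E K g"
  shows "apx E K (\<lambda>z. f z - g z)"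
  using apx_add[OF assms(1) apx_scale[OF assms(2), of "-1"]] by simp

lemma apx_sum:
  assumes "finite I" "\<And>i. i \<in> I \<Longrightarrow> apx E K (f i)"
  shows "apx E K (\<lambda>z. \<Sum>i\<in>I. f i z)"
  using assms
proof (induction I rule: finite_induct)
  case empty then show ?case using apx_const[of E K 0] by simp
next
  case (insert x F)
  then show ?case using apx_add[of E K "f x" "\<lambda>z. \<Sum>i\<in>F. f i z"] by simp
qed

lemma apx_lim:
  assumes "\<And>d. d > 0 \<Longrightarrow> \<exists>h. apx E K h \<and> (\<forall>z\<in>K. \<bar>h z - g z\<bar> < d)"
  shows "apx E K g"
  unfolding apx_def
proof (intro allI impI)
  fix d :: real assume d: "d > 0"
  obtain h where h: "apx E K h" "\<forall>z\<in>K. \<bar>h z - g z\<bar> < d/2"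
    using assms[of "d/2"] d by auto
  obtain r where r: "r \<in> herglotz_class E" "\<forall>z\<in>K. cmod (r z - complex_of_real (h z)) < d/2"
    using h(1) d unfolding apx_def by (meson half_gt_zero)
  show "\<exists>r\<in>herglotz_class E. \<forall>z\<in>K. cmod (r z - complex_of_real (g z)) < d"
  proof (intro bexI[OF _ r(1)] ballI)
    fix z assume z: "z \<in> K"
    have "cmod (r z - complex_of_real (g z))
        = cmod ((r z - complex_of_real (h z)) + complex_of_real (h z - g z))"
      by (simp add: algebra_simps)
    also have "\<dots> \<le> cmod (r z - complex_of_real (h z)) + cmod (complex_of_real (h z - g z))"
      by (rule norm_triangle_ineq)
    also have "\<dots> < d/2 + d/2"
    proof (rule add_strict_mono)
      show "cmod (r z - complex_of_real (h z)) < d/2" using r(2) z by blast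
      have "\<bar>h z - g z\<bar> < d/2" using h(2) z by blast
      then show "cmod (complex_of_real (h z - g z)) < d/2" by (simp only: norm_of_real)
    qed
    also have "\<dots> = d" by simp
    finally show "cmod (r z - complex_of_real (g z)) < d" .
  qed
qed


lemma re_ratio:
  fixes a z :: complex
  assumes "cmod a = 1" "cmod z = 1"
  shows "Re ((a + z) / (a - z)) = 0"
proof -
  have a: "(Re a)^2 + (Im a)^2 = 1" using assms(1) cmod_power2[of a] by simp
  have z: "(Re z)^2 + (Im z)^2 = 1" using assms(2) cmod_power2[of z] by simp
  have "Re (a + z) * Re (a - z) + Im (a + z) * Im (a - z) = 0"
    using a z by (simp add: algebra_simps power2_eq_square)
  then show ?thesis by (simp add: Re_divide)
qed

lemma geom:
  fixes s x :: real
  assumes "s \<noteq> 0" "s \<noteq> x"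
  shows "(\<Sum>m<j. x^m / s^(m+1)) + x^j / (s^j * (s - x)) = 1 / (s - x)"
proof (induction j)
  case 0 then show ?case by simp
next
  case (Suc j)
  have "x^j / (s^j * (s - x)) = x^j / s^(j+1) + x^(j+1) / (s^(j+1) * (s - x))"
    using assms by (simp add: field_simps)
  then show ?case using Suc by simp
qed

lemma apx_powers:
  fixes t :: "complex \<Rightarrow> real"
  assumes bnd: "\<forall>z\<in>K. \<bar>t z\<bar> \<le> M" and M: "M \<ge> 0" and tt: "apx E K t"
    and big: "\<forall>B. \<exists>s. \<bar>s\<bar> > B \<and> apx E K (\<lambda>z. (1 + t z^2) / (s - t z))"
  shows "apx E K (\<lambda>z. t z ^ n)"
proof (induction n rule: less_induct)
  case (less n)
  show ?case
  proof (cases n)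
    case 0 then show ?thesis using apx_const[of E K 1] by simp
  next
    case (Suc n')
    show ?thesis
    proof (cases n')
      case 0 then show ?thesis using tt Suc by simp
    next
      case (Suc j)
      have n: "n = j + 2" using Suc \<open>n = Suc n'\<close> by simp
      have IH: "\<And>m. m < j + 2 \<Longrightarrow> apx E K (\<lambda>z. t z ^ m)" using less n by simp
      have A: "apx E K (\<lambda>z. t z ^ j + t z ^ (j + 2))"
      proof (rule apx_lim)
        fix d :: real assume d: "d > 0"
        define C where "C = (1 + M^2) * M^(j+1)"
        have C0: "C \<ge> 0" using M by (simp add: C_def)
        obtain s where s: "\<bar>s\<bar> > M + C/d + 1" and as: "apx E K (\<lambda>z. (1 + t z^2) / (s - t z))"
          using big by blast
        have s0: "s \<noteq> 0" using s M C0 d by (smt (verit) divide_nonneg_pos)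
        define h where "h = (\<lambda>z. s^(j+1) * ((1 + t z^2) / (s - t z) -
            (\<Sum>m<j. (1 / s^(m+1)) * (t z ^ m + t z ^ (m + 2)))))"
        have "apx E K h"
          unfolding h_def
          by (intro apx_scale apx_diff as apx_sum apx_add IH) auto
        moreover have "\<forall>z\<in>K. \<bar>h z - (t z ^ j + t z ^ (j + 2))\<bar> < d"
        proof
          fix z assume z: "z \<in> K"
          define x where "x = t z"
          have x: "\<bar>x\<bar> \<le> M" using bnd z by (simp add: x_def)
          have sx: "\<bar>s - x\<bar> > C/d + 1" using s x by linarith
          then have sx0: "s \<noteq> x" using C0 d by (smt (verit) divide_nonneg_pos)
          have "(\<Sum>m<j. (1 / s^(m+1)) * (x ^ m + x ^ (m + 2))) = (1 + x^2) * (\<Sum>m<j. x^m / s^(m+1))"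
            unfolding sum_distrib_left
            by (rule sum.cong) (simp_all add: field_simps power2_eq_square)
          also have "\<dots> = (1 + x^2) * (1 / (s - x) - x^j / (s^j * (s - x)))"
          proof -
            have "(\<Sum>m<j. x^m / s^(m+1)) = 1 / (s - x) - x^j / (s^j * (s - x))"
              using geom[OF s0 sx0, of j] by linarith
            then show ?thesis by (simp only:)
          qed
          finally have sm: "(\<Sum>m<j. (1 / s^(m+1)) * (x ^ m + x ^ (m + 2))) = \<dots>" .
          have hz: "h z - (x ^ j + x ^ (j + 2)) = (1 + x^2) * x^(j+1) / (s - x)"
          proof -
            have sx1: "s - x \<noteq> 0" using sx0 by simp
            have h1: "h z = s^(j+1) * ((1 + x^2) * (x^j / (s^j * (s - x))))"
              unfolding h_def x_def[symmetric] sm by (simp add: right_diff_distrib)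
            also have "\<dots> = s * ((1 + x^2) * x^j) / (s - x)"
              using s0 sx1 by (simp add: field_simps)
            finally have "h z = s * ((1 + x^2) * x^j) / (s - x)" .
            moreover have "x ^ j + x ^ (j + 2) = (1 + x^2) * x^j"
              by (simp add: algebra_simps power_add power2_eq_square)
            ultimately have "h z - (x ^ j + x ^ (j + 2)) = s * ((1 + x^2) * x^j) / (s - x) - (1 + x^2) * x^j"
              by simp
            also have "\<dots> = (1 + x^2) * x^j * x / (s - x)"
              using sx1 by (simp add: field_simps)
            finally show ?thesis by (simp add: power_add mult.assoc)
          qed
          have num: "\<bar>(1 + x^2) * x^(j+1)\<bar> \<le> C"
          proof -
            have "\<bar>(1 + x^2) * x^(j+1)\<bar> = (1 + x^2) * \<bar>x\<bar>^(j+1)" by (simp add: abs_mult power_abs)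
            also have "\<dots> \<le> (1 + M^2) * M^(j+1)"
            proof (rule mult_mono)
              have "x^2 \<le> M^2" using x by (metis abs_le_square_iff abs_of_nonneg M)
              then show "1 + x^2 \<le> 1 + M^2" by simp
              show "\<bar>x\<bar>^(j+1) \<le> M^(j+1)" using x by (intro power_mono) auto
            qed (use M in auto)
            finally show ?thesis by (simp add: C_def)
          qed
          have "d * \<bar>s - x\<bar> > d * (C/d + 1)" using sx d by (intro mult_strict_left_mono) auto
          also have "d * (C/d + 1) = C + d" using d by (simp add: field_simps)
          finally have "\<bar>(1 + x^2) * x^(j+1)\<bar> < d * \<bar>s - x\<bar>" using num d by linarith
          then have "\<bar>(1 + x^2) * x^(j+1) / (s - x)\<bar> < d"
            using sx0 by (simp add: abs_divide divide_less_eq mult.commute)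
          then show "\<bar>h z - (t z ^ j + t z ^ (j + 2))\<bar> < d" using hz by (simp add: x_def)
        qed
        ultimately show "\<exists>h. apx E K h \<and> (\<forall>z\<in>K. \<bar>h z - (t z ^ j + t z ^ (j + 2))\<bar> < d)"
          by blast
      qed
      have "apx E K (\<lambda>z. (t z ^ j + t z ^ (j + 2)) - t z ^ j)"
        by (rule apx_diff[OF A IH]) simp
      then show ?thesis using n by simp
    qed
  qed
qed


lemma real_form:
  fixes a z :: complex
  assumes "cmod a = 1" "cmod z = 1"
  shows "\<i> * ((a + z) / (a - z)) = complex_of_real (Re (\<i> * ((a + z) / (a - z))))"
proof -
  have "Im (\<i> * ((a + z) / (a - z))) = 0" using re_ratio[OF assms] by (simp only: Im_i_times)
  then show ?thesis by (intro complex_eqI) (simp_all only: Re_complex_of_real Im_complex_of_real)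
qed

lemma key_ident:
  fixes a w z :: complex
  assumes "a \<noteq> 0" "w \<noteq> a" "z \<noteq> a" "w \<noteq> z"
  shows "\<i> * ((a + w) / (a - w)) - \<i> * ((a + z) / (a - z)) \<noteq> 0"
    and "\<i> * ((w + z) / (w - z)) * (\<i> * ((a + w) / (a - w)) - \<i> * ((a + z) / (a - z)))
         = \<i> * ((a + w) / (a - w)) * (\<i> * ((a + z) / (a - z))) + 1"
proof -
  have aw: "a - w \<noteq> 0" and az: "a - z \<noteq> 0" and wz: "w - z \<noteq> 0" using assms by auto
  have d: "\<i> * ((a + w) / (a - w)) - \<i> * ((a + z) / (a - z)) = 2 * \<i> * a * (w - z) / ((a - w) * (a - z))"
    using aw az by (simp add: field_simps)
  show "\<i> * ((a + w) / (a - w)) - \<i> * ((a + z) / (a - z)) \<noteq> 0"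
    unfolding d using aw az wz assms(1) by simp
  show "\<i> * ((w + z) / (w - z)) * (\<i> * ((a + w) / (a - w)) - \<i> * ((a + z) / (a - z)))
         = \<i> * ((a + w) / (a - w)) * (\<i> * ((a + z) / (a - z))) + 1"
  proof -
    have p: "(a - w) * (a - z) \<noteq> 0" using aw az by simp
    have l: "\<i> * ((w + z) / (w - z)) * (2 * \<i> * a * (w - z) / ((a - w) * (a - z)))
        = - 2 * a * (w + z) / ((a - w) * (a - z))"
    proof -
      have gen: "\<And>X q p a :: complex. q \<noteq> 0 \<Longrightarrow> p \<noteq> 0 \<Longrightarrow>
          \<i> * (X / q) * (2 * \<i> * a * q / p) = - 2 * a * X / p"
        by (simp add: field_simps)
      show ?thesis using gen[OF wz p] .
    qed
    have ii: "\<i> * ((a + w) / (a - w)) * (\<i> * ((a + z) / (a - z))) = - ((a + w) * (a + z) / ((a - w) * (a - z)))"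
    proof -
      have gen: "\<And>A B C D :: complex. B \<noteq> 0 \<Longrightarrow> D \<noteq> 0 \<Longrightarrow>
          \<i> * (A / B) * (\<i> * (C / D)) = - (A * C / (B * D))"
        by (simp add: field_simps)
      show ?thesis using gen[OF aw az] .
    qed
    have r: "- ((a + w) * (a + z) / ((a - w) * (a - z))) + 1 = - 2 * a * (w + z) / ((a - w) * (a - z))"
    proof -
      have "- ((a + w) * (a + z) / ((a - w) * (a - z))) + 1 = ((a - w) * (a - z) - (a + w) * (a + z)) / ((a - w) * (a - z))"
        using p by (simp add: field_simps)
      also have "(a - w) * (a - z) - (a + w) * (a + z) = - 2 * a * (w + z)"
        by (simp add: algebra_simps)
      finally show ?thesis .
    qed
    show ?thesis unfolding d l ii r ..
  qed
qed

lemma real_ident: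
  fixes a w z :: complex
  assumes "cmod a = 1" "cmod w = 1" "cmod z = 1" "w \<noteq> a" "z \<noteq> a" "w \<noteq> z"
  defines "s \<equiv> Re (\<i> * ((a + w) / (a - w)))" and "t \<equiv> Re (\<i> * ((a + z) / (a - z)))"
  shows "s \<noteq> t" and "\<i> * ((w + z) / (w - z)) = complex_of_real ((s * t + 1) / (s - t))"
proof -
  have a0: "a \<noteq> 0" using assms(1) by auto
  have S: "\<i> * ((a + w) / (a - w)) = complex_of_real s" unfolding s_def by (rule real_form[OF assms(1,2)])
  have T: "\<i> * ((a + z) / (a - z)) = complex_of_real t" unfolding t_def by (rule real_form[OF assms(1,3)])
  have ne: "complex_of_real s - complex_of_real t \<noteq> 0"
    using key_ident(1)[OF a0 assms(4-6)] unfolding S T .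
  then show "s \<noteq> t" by auto
  have eq: "\<i> * ((w + z) / (w - z)) * (complex_of_real s - complex_of_real t) = complex_of_real s * complex_of_real t + 1"
    using key_ident(2)[OF a0 assms(4-6)] unfolding S T .
  have "\<i> * ((w + z) / (w - z)) = (complex_of_real s * complex_of_real t + 1) / (complex_of_real s - complex_of_real t)"
    using eq ne by (simp add: eq_divide_eq)
  then show "\<i> * ((w + z) / (w - z)) = complex_of_real ((s * t + 1) / (s - t))" by simp
qed


lemma apx_cong:
  assumes "apx E K f" "\<And>z. z \<in> K \<Longrightarrow> f z = g z"
  shows "apx E K g"
  using assms unfolding apx_def by (metis (no_types, lifting))

theorem mainTheorem5:
  fixes E K1 :: "complex set"
  assumes "E \<subseteq> sphere 0 1" and "infinite E"
    and "K1 \<subseteq> sphere 0 1" and "compact K1"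
    and "closure E \<inter> K1 = {}"
  shows "(\<forall>r\<in>herglotz_class E. \<forall>z\<in>K1. Im (r z) = 0) \<and>
         (\<forall>f :: complex \<Rightarrow> real. continuous_on K1 f \<longrightarrow>
            (\<forall>\<epsilon>>0. \<exists>r\<in>herglotz_class E. \<forall>z\<in>K1. cmod (r z - complex_of_real (f z)) < \<epsilon>))"
proof -
  obtain a where a: "a \<in> sphere 0 1" "a islimpt E"
    using Heine_Borel_imp_Bolzano_Weierstrass[OF compact_sphere assms(2) assms(1)] by blast
  have aE: "a \<in> closure E" using a(2) by (simp add: closure_def)
  have aK: "a \<notin> K1" using aE assms(5) by blast
  have a1: "cmod a = 1" using a(1) by simp
  have a0: "a \<noteq> 0" using a1 by auto
  have K1n: "\<And>z. z \<in> K1 \<Longrightarrow> cmod z = 1" using assms(3) by auto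
  have En: "\<And>w. w \<in> E \<Longrightarrow> cmod w = 1" using assms(1) by auto
  have za: "\<And>z. z \<in> K1 \<Longrightarrow> z \<noteq> a" using aK by auto
  have wz: "\<And>w z. w \<in> E \<Longrightarrow> z \<in> K1 \<Longrightarrow> w \<noteq> z" using assms(5) closure_subset by blast

  have part1: "\<forall>r\<in>herglotz_class E. \<forall>z\<in>K1. Im (r z) = 0"
  proof (intro ballI)
    fix r z assume r: "r \<in> herglotz_class E" and z: "z \<in> K1"
    obtain n :: nat and c :: "nat \<Rightarrow> real" and e :: "nat \<Rightarrow> complex" where e: "\<forall>k\<in>{1..n}. e k \<in> E" and req:
      "r = (\<lambda>z. complex_of_real (c 0) +
              \<i> * (\<Sum>k=1..n. complex_of_real (c k) * ((e k + z) / (e k - z))))"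
      using hc_ex[OF r] by blast
    have "Re (\<Sum>k=1..n. complex_of_real (c k) * ((e k + z) / (e k - z))) = 0"
      unfolding Re_sum
    proof (rule sum.neutral, rule ballI)
      fix k assume k: "k \<in> {1..n}"
      have r0: "Re ((e k + z) / (e k - z)) = 0" using re_ratio[OF En K1n] e k z by blast
      have gen: "\<And>Q. Re (complex_of_real (c k) * Q) = c k * Re Q" by simp
      have "Re (complex_of_real (c k) * ((e k + z) / (e k - z))) = c k * Re ((e k + z) / (e k - z))"
        by (rule gen)
      then show "Re (complex_of_real (c k) * ((e k + z) / (e k - z))) = 0" by (simp only: r0 mult_zero_right)
    qed
    moreover have "Im (r z) = Re (\<Sum>k=1..n. complex_of_real (c k) * ((e k + z) / (e k - z)))"
      unfolding req by simp
    ultimately show "Im (r z) = 0" by linarith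
  qed

  define T where "T = (\<lambda>z. Re (\<i> * ((a + z) / (a - z))))"
  have Tform: "\<And>z. cmod z = 1 \<Longrightarrow> \<i> * ((a + z) / (a - z)) = complex_of_real (T z)"
    unfolding T_def using real_form[OF a1] by blast
  have Tc: "continuous_on K1 T" unfolding T_def
    by (intro continuous_intros) (auto dest: za)
  obtain M where M: "M \<ge> 0" "\<forall>z\<in>K1. \<bar>T z\<bar> \<le> M"
  proof -
    have "bounded (T ` K1)" by (intro compact_imp_bounded compact_continuous_image Tc assms(4))
    then obtain b where "b > 0" "\<forall>x\<in>T ` K1. norm x \<le> b" using bounded_pos by blast
    then show ?thesis using that[of b] by auto
  qed
  have gen_w: "apx E K1 (\<lambda>z. (T w * T z + 1) / (T w - T z))" if w: "w \<in> E" "w \<noteq> a" for w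
    unfolding apx_def
  proof (intro allI impI bexI[OF _ hc_gen[OF w(1)]] ballI)
    fix d :: real and z assume d: "d > 0" and z: "z \<in> K1"
    have "\<i> * ((w + z) / (w - z)) = complex_of_real ((T w * T z + 1) / (T w - T z))"
      unfolding T_def by (rule real_ident(2)[OF a1 En[OF w(1)] K1n[OF z] w(2) za[OF z] wz[OF w(1) z]])
    then show "cmod (\<i> * ((w + z) / (w - z)) - complex_of_real ((T w * T z + 1) / (T w - T z))) < d"
      using d by simp
  qed
  have sne: "T w \<noteq> T z" if "w \<in> E" "w \<noteq> a" "z \<in> K1" for w z
    unfolding T_def by (rule real_ident(1)[OF a1 En[OF that(1)] K1n[OF that(3)] that(2) za[OF that(3)] wz[OF that(1,3)]])
  have far: "\<exists>w\<in>E. w \<noteq> a \<and> \<bar>T w\<bar> > B" for B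
  proof -
    define \<delta> where "\<delta> = min 1 (1 / (\<bar>B\<bar> + 1))"
    have \<delta>: "\<delta> > 0" unfolding \<delta>_def by (simp add: add_pos_nonneg)
    obtain w where w: "w \<in> E" "w \<noteq> a" "dist w a < \<delta>"
      using a(2) \<delta> unfolding islimpt_approachable by blast
    define d where "d = cmod (a - w)"
    have d0: "d > 0" using w(2) by (simp add: d_def)
    have dd: "d = dist w a" by (simp add: d_def dist_norm norm_minus_commute)
    have "\<delta> \<le> 1" "\<delta> \<le> 1 / (\<bar>B\<bar> + 1)" unfolding \<delta>_def by auto
    then have d1: "d < 1" and d2: "d < 1 / (\<bar>B\<bar> + 1)" using w(3) dd by linarith+
    have dB: "d * (\<bar>B\<bar> + 1) < 1"
    proof -
      from d2 show ?thesis by (simp add: field_simps add_pos_nonneg)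
    qed
    have "2 = cmod ((a + w) + (a - w))" using a1 by (simp add: norm_mult)
    also have "\<dots> \<le> cmod (a + w) + d" unfolding d_def by (rule norm_triangle_ineq)
    finally have aw: "cmod (a + w) \<ge> 2 - d" by simp
    have "\<bar>T w\<bar> = cmod (\<i> * ((a + w) / (a - w)))" using Tform[OF En[OF w(1)]] by simp
    also have "\<dots> = cmod (a + w) / d" by (simp add: d_def norm_mult norm_divide)
    finally have Tw: "\<bar>T w\<bar> = cmod (a + w) / d" .
    have "cmod (a + w) / d \<ge> 1 / d" using aw d0 d1 by (intro divide_right_mono) auto
    moreover have "1 / d > \<bar>B\<bar> + 1" using dB d0 by (simp add: field_simps)
    ultimately have "\<bar>T w\<bar> > B" using Tw by linarith
    then show ?thesis using w by blast
  qed
  have Tapx: "apx E K1 T"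
  proof (rule apx_lim)
    fix d :: real assume d: "d > 0"
    obtain w where w: "w \<in> E" "w \<noteq> a" "\<bar>T w\<bar> > M + (1 + M^2) / d + 1" using far by blast
    show "\<exists>h. apx E K1 h \<and> (\<forall>z\<in>K1. \<bar>h z - T z\<bar> < d)"
    proof (intro exI conjI ballI)
      show "apx E K1 (\<lambda>z. (T w * T z + 1) / (T w - T z))" by (rule gen_w[OF w(1,2)])
      fix z assume z: "z \<in> K1"
      define s where "s = T w"
      define t where "t = T z"
      have st: "s - t \<noteq> 0" using sne[OF w(1,2) z] by (simp add: s_def t_def)
      have tM: "\<bar>t\<bar> \<le> M" using M(2) z by (simp add: t_def)
      have e: "(s * t + 1) / (s - t) - t = (1 + t^2) / (s - t)"
        using st by (simp add: field_simps power2_eq_square)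
      have sx: "\<bar>s - t\<bar> > (1 + M^2) / d + 1" using w(3) tM unfolding s_def by linarith
      have "t^2 \<le> M^2" using tM by (metis abs_le_square_iff abs_of_nonneg M(1))
      then have num: "1 + t^2 \<le> 1 + M^2" by simp
      have "d * \<bar>s - t\<bar> > d * ((1 + M^2) / d + 1)" using sx d by (intro mult_strict_left_mono) auto
      also have "d * ((1 + M^2) / d + 1) = (1 + M^2) + d" using d by (simp add: field_simps)
      finally have "\<bar>1 + t^2\<bar> < d * \<bar>s - t\<bar>" using num d by simp
      then have "\<bar>(1 + t^2) / (s - t)\<bar> < d"
        using st by (simp add: abs_divide divide_less_eq mult.commute)
      then show "\<bar>(T w * T z + 1) / (T w - T z) - T z\<bar> < d" using e by (simp add: s_def t_def)
    qed
  qed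
  have big: "\<forall>B. \<exists>s. \<bar>s\<bar> > B \<and> apx E K1 (\<lambda>z. (1 + T z^2) / (s - T z))"
  proof
    fix B
    obtain w where w: "w \<in> E" "w \<noteq> a" "\<bar>T w\<bar> > max B M" using far by blast
    have "apx E K1 (\<lambda>z. (T w * T z + 1) / (T w - T z) - T z)"
      by (rule apx_diff[OF gen_w[OF w(1,2)] Tapx])
    then have "apx E K1 (\<lambda>z. (1 + T z^2) / (T w - T z))"
    proof (rule apx_cong)
      fix z assume z: "z \<in> K1"
      have "T w - T z \<noteq> 0" using sne[OF w(1,2) z] by simp
      then show "(T w * T z + 1) / (T w - T z) - T z = (1 + T z^2) / (T w - T z)"
        by (simp add: field_simps power2_eq_square)
    qed
    then show "\<exists>s. \<bar>s\<bar> > B \<and> apx E K1 (\<lambda>z. (1 + T z^2) / (s - T z))" using w(3) by auto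
  qed
  have pows: "\<And>n. apx E K1 (\<lambda>z. T z ^ n)" by (rule apx_powers[OF M(2) M(1) Tapx big])

  have inj: "z = y" if z: "z \<in> K1" and y: "y \<in> K1" and eq: "T z = T y" for z y
  proof -
    have "\<i> * ((a + z) / (a - z)) = \<i> * ((a + y) / (a - y))"
      using Tform[OF K1n[OF z]] Tform[OF K1n[OF y]] eq by simp
    then have q: "(a + z) / (a - z) = (a + y) / (a - y)" by (metis mult_cancel_left complex_i_not_zero)
    have az: "a - z \<noteq> 0" and ay: "a - y \<noteq> 0" using za[OF z] za[OF y] by auto
    have "(a + z) * (a - y) = (a + y) * (a - z)" using q az ay by (simp add: divide_eq_eq eq_divide_eq)
    then have "2 * a * (z - y) = 0" by (simp add: algebra_simps)
    then show ?thesis using a0 by simp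
  qed

  interpret PR: function_ring_on "{f. \<exists>p. real_polynomial_function p \<and> f = (\<lambda>z. p (T z))}" K1
  proof unfold_locales
    show "compact K1" by (rule assms(4))
  next
    fix f assume "f \<in> {f. \<exists>p. real_polynomial_function p \<and> f = (\<lambda>z. p (T z))}"
    then obtain p where p: "real_polynomial_function p" "f = (\<lambda>z. p (T z))" by blast
    have "continuous_on UNIV p"
      using continuous_real_polymonial_function[OF p(1)] by (simp add: continuous_at_imp_continuous_on)
    then show "continuous_on K1 f" unfolding p(2) using Tc by (rule continuous_on_compose2) auto
  next
    fix f g assume "f \<in> {f. \<exists>p. real_polynomial_function p \<and> f = (\<lambda>z. p (T z))}"
      "g \<in> {f. \<exists>p. real_polynomial_function p \<and> f = (\<lambda>z. p (T z))}"
    then obtain p q where p: "real_polynomial_function p" "f = (\<lambda>z. p (T z))"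
      and q: "real_polynomial_function q" "g = (\<lambda>z. q (T z))" by blast
    show "(\<lambda>x. f x + g x) \<in> {f. \<exists>p. real_polynomial_function p \<and> f = (\<lambda>z. p (T z))}"
      using real_polynomial_function.intros(3)[OF p(1) q(1)] p(2) q(2) by auto
    show "(\<lambda>x. f x * g x) \<in> {f. \<exists>p. real_polynomial_function p \<and> f = (\<lambda>z. p (T z))}"
      using real_polynomial_function.intros(4)[OF p(1) q(1)] p(2) q(2) by auto
  next
    fix c :: real
    show "(\<lambda>_. c) \<in> {f. \<exists>p. real_polynomial_function p \<and> f = (\<lambda>z. p (T z))}"
      using real_polynomial_function.intros(2)[of c] by auto
  next
    fix x y assume "x \<in> K1" "y \<in> K1" "x \<noteq> y"
    then have "T x \<noteq> T y" using inj by blast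
    moreover have "real_polynomial_function (\<lambda>x::real. x)"
      by (rule real_polynomial_function.intros(1)) (rule bounded_linear_ident)
    ultimately show "\<exists>f\<in>{f. \<exists>p. real_polynomial_function p \<and> f = (\<lambda>z. p (T z))}. f x \<noteq> f y"
      by (intro bexI[of _ T]) auto
  qed

  have part2: "\<forall>f :: complex \<Rightarrow> real. continuous_on K1 f \<longrightarrow>
            (\<forall>\<epsilon>>0. \<exists>r\<in>herglotz_class E. \<forall>z\<in>K1. cmod (r z - complex_of_real (f z)) < \<epsilon>)"
  proof (intro allI impI)
    fix f :: "complex \<Rightarrow> real" and \<epsilon> :: real
    assume f: "continuous_on K1 f" and e: "\<epsilon> > 0"
    obtain g where g: "g \<in> {f. \<exists>p. real_polynomial_function p \<and> f = (\<lambda>z. p (T z))}"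
      "\<forall>x\<in>K1. \<bar>f x - g x\<bar> < \<epsilon>/2"
      using PR.Stone_Weierstrass_basic[OF f, of "\<epsilon>/2"] e by auto
    then obtain p where p: "real_polynomial_function p" "g = (\<lambda>z. p (T z))" by blast
    then obtain c n where c: "p = (\<lambda>x. \<Sum>i\<le>n. c i * x^i)"
      using real_polynomial_function_iff_sum by blast
    have "apx E K1 (\<lambda>z. \<Sum>i\<in>{..n}. c i * T z ^ i)"
      by (intro apx_sum apx_scale pows) auto
    then have "apx E K1 g" by (simp add: p(2) c)
    then obtain r where r: "r \<in> herglotz_class E" "\<forall>z\<in>K1. cmod (r z - complex_of_real (g z)) < \<epsilon>/2"
      using e unfolding apx_def by (meson half_gt_zero)
    show "\<exists>r\<in>herglotz_class E. \<forall>z\<in>K1. cmod (r z - complex_of_real (f z)) < \<epsilon>"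
    proof (intro bexI[OF _ r(1)] ballI)
      fix z assume z: "z \<in> K1"
      have "cmod (r z - complex_of_real (f z))
          = cmod ((r z - complex_of_real (g z)) + complex_of_real (g z - f z))"
        by (simp add: algebra_simps)
      also have "\<dots> \<le> cmod (r z - complex_of_real (g z)) + cmod (complex_of_real (g z - f z))"
        by (rule norm_triangle_ineq)
      also have "\<dots> < \<epsilon>/2 + \<epsilon>/2"
      proof (rule add_strict_mono)
        show "cmod (r z - complex_of_real (g z)) < \<epsilon>/2" using r(2) z by blast
        have "\<bar>f z - g z\<bar> < \<epsilon>/2" using g(2) z by blast
        then have "\<bar>g z - f z\<bar> < \<epsilon>/2" by (simp add: abs_minus_commute)
        then show "cmod (complex_of_real (g z - f z)) < \<epsilon>/2" by (simp only: norm_of_real)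
      qed
      also have "\<dots> = \<epsilon>" by simp
      finally show "cmod (r z - complex_of_real (f z)) < \<epsilon>" .
    qed
  qed
  show ?thesis using part1 part2 by blast
qed

end
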